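(* Let $s_0\in(0,1)$ and let $\varphi:[0,\infty)\to(0,\infty)$ be a deterministic (measurable) function with $\int_0^\infty\varphi(s)\,ds<\infty$. Let $(P_t)_{t\ge0}$ be a stochastic process with almost surely continuous, positive sample paths such that $\sup_{t\ge0}\mathbb{E}[P_t]\le M<\infty$ for some constant $M$. Set $\beta_t=\varphi(t)P_t$ and let $(S_t)_{t\ge0}$ be the solution of $$\frac{dS_t}{dt}=-\beta_t S_t(1-S_t),\qquad S_0=s_0,$$ namely $S_t=\left[1+\left(\frac{1}{s_0}-1\right)\exp\left(\int_0^t\beta_r\,dr\right)\right]^{-1}$. Then the limit $S_\infty=\lim_{t\to\infty}S_t$ satisfies $S_\infty\in(0,s_0)$ almost surely.
   Context: This is an SI epidemic model with population normalized to one; $S_t$ is the susceptible fraction, $\varphi$ models a public health intervention and $P_t$ the random transmission rate in the absence of intervention. The intervention is called successful when $\int_0^\infty\varphi(s)\,ds<\infty$. *)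

theory Defs
  imports "HOL-Probability.Probability"
begin

definition SI_solution ::
  "real \<Rightarrow> (real \<Rightarrow> real) \<Rightarrow> (real \<Rightarrow> 'a \<Rightarrow> real) \<Rightarrow> real \<Rightarrow> 'a \<Rightarrow> real" where
  "SI_solution s0 \<phi> P t w =
     1 / (1 + (1 / s0 - 1) * exp (LBINT r=0..t. \<phi> r * P r w))"

end

theory Submission
  imports Defs
begin

lemma path_lemma:
  fixes \<phi> p :: "real \<Rightarrow> real" and s0 :: real
  assumes s0: "0 < s0" "s0 < 1"
    and phipos: "\<forall>t\<ge>0. 0 < \<phi> t"
    and phiint: "set_integrable lborel {0..} \<phi>"
    and pc: "continuous_on {0..} p" and ppos: "\<forall>t\<ge>0. 0 < p t"
    and fin: "(\<integral>\<^sup>+r. ennreal (indicator {0..} r * \<phi> r) * ennreal (p r) \<partial>lborel) \<noteq> \<infinity>"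
  shows "\<exists>L. ((\<lambda>t::real. 1 / (1 + (1 / s0 - 1) * exp (LBINT r=0..t. \<phi> r * p r))) \<longlongrightarrow> L) at_top
            \<and> 0 < L \<and> L < s0"
proof -
  define f where "f r = \<phi> r * p r" for r
  have m1: "(\<lambda>r. indicator {0..} r * \<phi> r) \<in> borel_measurable lborel"
    using phiint unfolding set_integrable_def by (simp add: integrable_iff_bounded)
  have m2: "(\<lambda>r. indicator {0..} r *\<^sub>R p r) \<in> borel_measurable lborel"
    using borel_measurable_continuous_on_indicator[OF _ pc] by simp
  have eqf: "indicator {0..} r *\<^sub>R f r = (indicator {0..} r * \<phi> r) * (indicator {0..} r *\<^sub>R p r)" for r
    by (simp add: f_def indicator_def)
  have meas: "(\<lambda>r. indicator {0..} r *\<^sub>R f r) \<in> borel_measurable lborel"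
    unfolding eqf using m1 m2 by measurable
  have int: "set_integrable lborel {0..} f"
    unfolding set_integrable_def
  proof (rule integrableI_bounded[OF meas])
    have "(\<integral>\<^sup>+ r. ennreal (norm (indicator {0..} r *\<^sub>R f r)) \<partial>lborel)
        = (\<integral>\<^sup>+r. ennreal (indicator {0..} r * \<phi> r) * ennreal (p r) \<partial>lborel)"
      apply (rule nn_integral_cong)
      using phipos ppos by (auto simp: f_def indicator_def ennreal_mult[symmetric] abs_mult less_imp_le)
    then show "(\<integral>\<^sup>+ r. ennreal (norm (indicator {0..} r *\<^sub>R f r)) \<partial>lborel) < \<infinity>"
      using fin by (simp add: top.not_eq_extremum)
  qed
  define I where "I = (LBINT r:{0..}. f r)"
  have lim0: "((\<lambda>t. LBINT r:{0..t}. f r) \<longlongrightarrow> I) at_top"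
    unfolding I_def by (rule tendsto_set_lebesgue_integral_at_top[OF _ int]) simp
  have lim: "((\<lambda>t::real. LBINT r=0..t. f r) \<longlongrightarrow> I) at_top"
  proof -
    have "\<forall>\<^sub>F t in at_top. (LBINT r:{0..t}. f r) = (LBINT r=0..t. f r)"
      using eventually_ge_at_top[of "0::real"]
      by eventually_elim (metis interval_integral_Icc zero_ereal_def)
    then show ?thesis using lim0 Lim_transform_eventually by fastforce
  qed
  have Ige: "I \<ge> 0"
    unfolding I_def set_lebesgue_integral_def using phipos ppos
    by (intro Bochner_Integration.integral_nonneg) (auto simp: f_def indicator_def less_imp_le)
  have "I \<noteq> 0"
  proof
    assume "I = 0"
    then have "AE r in lborel. indicator {0..} r *\<^sub>R f r = 0"
      using int phipos ppos unfolding I_def set_integrable_def set_lebesgue_integral_def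
      by (subst (asm) integral_nonneg_eq_0_iff_AE) (auto simp: f_def indicator_def less_imp_le intro!: AE_I2)
    then have "AE r in lborel. r \<notin> {0..1::real}"
      by eventually_elim (use phipos ppos in \<open>auto simp: f_def indicator_def split: if_splits\<close>)
    then have "emeasure lborel {0..1::real} = 0"
      by (subst (asm) AE_iff_measurable[where N="{0..1}"]) auto
    then show False by simp
  qed
  with Ige have Ipos: "I > 0" by simp
  define L where "L = 1 / (1 + (1 / s0 - 1) * exp I)"
  have c: "1 / s0 - 1 > 0" using s0 by (simp add: field_simps)
  have "((\<lambda>t::real. 1 / (1 + (1 / s0 - 1) * exp (LBINT r=0..t. \<phi> r * p r))) \<longlongrightarrow> L) at_top"
  proof -
    have "1 + (1 / s0 - 1) * exp I > 0" using c by (simp add: add_pos_pos)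
    then show ?thesis
      unfolding L_def using c lim unfolding f_def by (intro tendsto_intros) auto
  qed
  moreover have "0 < L" unfolding L_def using c by (simp add: add_pos_pos)
  moreover have "L < s0"
  proof -
    have "exp I > 1" using Ipos by simp
    then have "(1 / s0 - 1) * exp I > (1 / s0 - 1)" using c by simp
    then have "1 + (1 / s0 - 1) * exp I > 1 / s0" by simp
    then have "1 / (1 + (1 / s0 - 1) * exp I) < 1 / (1 / s0)"
    proof (rule divide_strict_left_mono)
      show "0 < (1 + (1 / s0 - 1) * exp I) * (1 / s0)"
        using \<open>1 + (1 / s0 - 1) * exp I > 1 / s0\<close> s0
        by (intro mult_pos_pos) (smt (verit) divide_pos_pos)+
    qed (use \<open>1 + (1 / s0 - 1) * exp I > 1 / s0\<close> in auto)
    then show ?thesis unfolding L_def by simp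
  qed
  ultimately show ?thesis by blast
qed


theorem mainTheorem2:
  fixes M :: "'a measure" and P :: "real \<Rightarrow> 'a \<Rightarrow> real"
    and \<phi> :: "real \<Rightarrow> real" and s0 Mb :: real
  assumes "prob_space M"
    and "0 < s0" "s0 < 1"
    and "\<forall>t\<ge>0. 0 < \<phi> t"
    and "set_integrable lborel {0..} \<phi>"
    and "\<forall>t\<ge>0. P t \<in> borel_measurable M"
    and "AE w in M. continuous_on {0..} (\<lambda>t. P t w) \<and> (\<forall>t\<ge>0. 0 < P t w)"
    and "\<forall>t\<ge>0. (\<integral>\<^sup>+ w. ennreal (P t w) \<partial>M) \<le> ennreal Mb"
  shows "AE w in M. \<exists>L. ((\<lambda>t. SI_solution s0 \<phi> P t w) \<longlongrightarrow> L) at_top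
                        \<and> 0 < L \<and> L < s0"
proof -
  interpret M: prob_space M by fact
  interpret PS: pair_sigma_finite M lborel
    by (simp add: pair_sigma_finite_def M.sigma_finite_measure_axioms lborel.sigma_finite_measure_axioms)
  define g where "g n r = real (nat \<lfloor>r * real (Suc n)\<rfloor>) / real (Suc n)" for n :: nat and r :: real
  define Q where "Q w r = liminf (\<lambda>n. ennreal (P (g n r) w))" for w r
  have g0: "g n r \<ge> 0" for n r unfolding g_def by simp
  have gconv: "(\<lambda>n. g n r) \<longlonglongrightarrow> r" if r0: "r \<ge> 0" for r
  proof (rule tendsto_sandwich)
    show "\<forall>\<^sub>F n in sequentially. r - inverse (real (Suc n)) \<le> g n r"
    proof (intro always_eventually allI)
      fix n
      have e: "real (nat \<lfloor>r * real (Suc n)\<rfloor>) = of_int \<lfloor>r * real (Suc n)\<rfloor>" using r0 by simp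
      have "r * real (Suc n) - 1 \<le> of_int \<lfloor>r * real (Suc n)\<rfloor>" by linarith
      then have "(r * real (Suc n) - 1) / real (Suc n) \<le> of_int \<lfloor>r * real (Suc n)\<rfloor> / real (Suc n)"
        by (rule divide_right_mono) simp
      moreover have "r - inverse (real (Suc n)) = (r * real (Suc n) - 1) / real (Suc n)"
        by (simp add: field_simps)
      ultimately show "r - inverse (real (Suc n)) \<le> g n r" unfolding g_def e by simp
    qed
    show "\<forall>\<^sub>F n in sequentially. g n r \<le> r"
    proof (intro always_eventually allI)
      fix n
      have e: "real (nat \<lfloor>r * real (Suc n)\<rfloor>) = of_int \<lfloor>r * real (Suc n)\<rfloor>" using r0 by simp
      have "of_int \<lfloor>r * real (Suc n)\<rfloor> \<le> r * real (Suc n)" by linarith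
      then have "of_int \<lfloor>r * real (Suc n)\<rfloor> / real (Suc n) \<le> (r * real (Suc n)) / real (Suc n)"
        by (rule divide_right_mono) simp
      then show "g n r \<le> r" unfolding g_def e by simp
    qed
    show "(\<lambda>n. r - inverse (real (Suc n))) \<longlonglongrightarrow> r"
      using tendsto_diff[OF tendsto_const LIMSEQ_inverse_real_of_nat, of r] by simp
  qed simp
  have Qn_meas: "(\<lambda>x. ennreal (P (g n (snd x)) (fst x))) \<in> borel_measurable (M \<Otimes>\<^sub>M lborel)" for n
    unfolding g_def
  proof (rule measurable_compose_countable[where f="\<lambda>k x. ennreal (P (real k / real (Suc n)) (fst x))" and g="\<lambda>x. nat \<lfloor>snd x * real (Suc n)\<rfloor>"])
    fix k :: nat
    have "P (real k / real (Suc n)) \<in> borel_measurable M" using assms(6) by simp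
    then have "(\<lambda>w. ennreal (P (real k / real (Suc n)) w)) \<in> borel_measurable M" by measurable
    then show "(\<lambda>x. ennreal (P (real k / real (Suc n)) (fst x))) \<in> borel_measurable (M \<Otimes>\<^sub>M lborel)"
      by (rule measurable_compose[OF measurable_fst])
  next
    show "(\<lambda>x. nat \<lfloor>snd x * real (Suc n)\<rfloor>) \<in> M \<Otimes>\<^sub>M lborel \<rightarrow>\<^sub>M count_space UNIV"
      by measurable
  qed
  have Qmeas: "(\<lambda>x. Q (fst x) (snd x)) \<in> borel_measurable (M \<Otimes>\<^sub>M lborel)"
    unfolding Q_def by (rule borel_measurable_liminf[OF Qn_meas])
  have QP: "Q w r = ennreal (P r w)"
    if w: "continuous_on {0..} (\<lambda>t. P t w) \<and> (\<forall>t\<ge>0. 0 < P t w)" and r: "r \<ge> 0" for w r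
  proof -
    have "(\<lambda>n. P (g n r) w) \<longlonglongrightarrow> P r w"
      using continuous_on_tendsto_compose[OF conjunct1[OF w] gconv[OF r]] r g0 by simp
    then have "(\<lambda>n. ennreal (P (g n r) w)) \<longlonglongrightarrow> ennreal (P r w)"
      by (rule tendsto_ennrealI)
    then show ?thesis unfolding Q_def by (simp add: lim_imp_Liminf)
  qed
  have EQ: "(\<integral>\<^sup>+w. Q w r \<partial>M) \<le> ennreal Mb" if r: "r \<ge> 0" for r
  proof -
    have "AE w in M. Q w r = ennreal (P r w)"
      using assms(7) by eventually_elim (use QP r in auto)
    then have "(\<integral>\<^sup>+w. Q w r \<partial>M) = (\<integral>\<^sup>+w. ennreal (P r w) \<partial>M)"
      by (rule nn_integral_cong_AE)
    then show ?thesis using assms(8) r by simp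
  qed
  have phim: "(\<lambda>r. indicator {0..} r * \<phi> r) \<in> borel_measurable lborel"
    using assms(5) unfolding set_integrable_def by (simp add: integrable_iff_bounded)
  have phifin: "(\<integral>\<^sup>+r. ennreal (indicator {0..} r * \<phi> r) \<partial>lborel) < \<infinity>"
  proof -
    have "(\<integral>\<^sup>+r. ennreal (norm (indicator {0..} r *\<^sub>R \<phi> r)) \<partial>lborel) < \<infinity>"
      using assms(5) unfolding set_integrable_def by (simp add: integrable_iff_bounded)
    moreover have "(\<integral>\<^sup>+r. ennreal (norm (indicator {0..} r *\<^sub>R \<phi> r)) \<partial>lborel)
        = (\<integral>\<^sup>+r. ennreal (indicator {0..} r * \<phi> r) \<partial>lborel)"
      using assms(4) by (intro nn_integral_cong) (auto simp: indicator_def)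
    ultimately show ?thesis by simp
  qed
  define F where "F w r = ennreal (indicator {0..} r * \<phi> r) * Q w r" for w r
  have Fmeas: "case_prod F \<in> borel_measurable (M \<Otimes>\<^sub>M lborel)"
  proof -
    have "(\<lambda>x. ennreal (indicator {0..} (snd x) * \<phi> (snd x))) \<in> borel_measurable (M \<Otimes>\<^sub>M lborel)"
      using phim by measurable
    then have "(\<lambda>x. ennreal (indicator {0..} (snd x) * \<phi> (snd x)) * Q (fst x) (snd x)) \<in> borel_measurable (M \<Otimes>\<^sub>M lborel)"
      using Qmeas by (rule borel_measurable_times_ennreal)
    then show ?thesis unfolding F_def by (simp add: case_prod_beta')
  qed
  have "(\<integral>\<^sup>+w. (\<integral>\<^sup>+r. F w r \<partial>lborel) \<partial>M) = (\<integral>\<^sup>+r. (\<integral>\<^sup>+w. F w r \<partial>M) \<partial>lborel)"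
    using PS.Fubini'[OF Fmeas] by simp
  also have "\<dots> \<le> (\<integral>\<^sup>+r. ennreal (indicator {0..} r * \<phi> r) * ennreal Mb \<partial>lborel)"
  proof (rule nn_integral_mono)
    fix r
    show "(\<integral>\<^sup>+w. F w r \<partial>M) \<le> ennreal (indicator {0..} r * \<phi> r) * ennreal Mb"
    proof (cases "r \<ge> 0")
      case True
      have m: "(\<lambda>w. Q w r) \<in> borel_measurable M"
        using measurable_compose[OF _ Qmeas, of "\<lambda>w. (w, r)"] by simp
      have "(\<integral>\<^sup>+w. F w r \<partial>M) = ennreal (indicator {0..} r * \<phi> r) * (\<integral>\<^sup>+w. Q w r \<partial>M)"
        unfolding F_def by (rule nn_integral_cmult[OF m])
      also have "\<dots> \<le> ennreal (indicator {0..} r * \<phi> r) * ennreal Mb"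
        by (intro mult_left_mono EQ True) simp
      finally show ?thesis .
    next
      case False
      then show ?thesis by (simp add: F_def indicator_def)
    qed
  qed
  also have "\<dots> = (\<integral>\<^sup>+r. ennreal (indicator {0..} r * \<phi> r) \<partial>lborel) * ennreal Mb"
    by (intro nn_integral_multc measurable_compose[OF phim measurable_ennreal])
  also have "\<dots> < \<infinity>" using phifin by (simp add: ennreal_mult_less_top)
  finally have fin: "(\<integral>\<^sup>+w. (\<integral>\<^sup>+r. F w r \<partial>lborel) \<partial>M) \<noteq> \<infinity>" by simp
  have "(\<lambda>w. \<integral>\<^sup>+r. F w r \<partial>lborel) \<in> borel_measurable M"
    using lborel.borel_measurable_nn_integral[OF Fmeas] .
  from nn_integral_PInf_AE[OF this fin]
  have AEfin: "AE w in M. (\<integral>\<^sup>+r. F w r \<partial>lborel) \<noteq> \<infinity>" .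
  show ?thesis
    using assms(7) AEfin
  proof eventually_elim
    case (elim w)
    have "(\<integral>\<^sup>+r. ennreal (indicator {0..} r * \<phi> r) * ennreal (P r w) \<partial>lborel) = (\<integral>\<^sup>+r. F w r \<partial>lborel)"
      by (intro nn_integral_cong) (use QP[OF elim(1)] in \<open>auto simp: F_def indicator_def\<close>)
    with elim have "(\<integral>\<^sup>+r. ennreal (indicator {0..} r * \<phi> r) * ennreal (P r w) \<partial>lborel) \<noteq> \<infinity>" by simp
    from path_lemma[OF assms(2,3,4,5) _ _ this] elim(1)
    show ?case unfolding SI_solution_def by simp
  qed
qed

end
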